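(* Let $X$ and $Y$ be metrizable spaces that are locally compact and $\sigma$-compact, let $G$ be a group, and let $\varphi\colon G\times X\to X$ and $\psi\colon G\times Y\to Y$ be metric-independent expansive (MIE) actions. Then the coproduct action of $G$ on the disjoint union $X\sqcup Y$ (acting by $\varphi$ on $X$ and by $\psi$ on $Y$) is MIE.
   Context: For a metric $d$ on a space $Z$, an action of $G$ on $Z$ is expansive with respect to $d$ if there is $c>0$ such that for all $x\neq y$ in $Z$ there is $g\in G$ with $d(g\cdot x,g\cdot y)>c$. The action is metric-independent expansive (MIE) if it is expansive with respect to every metric compatible with the topology of $Z$. *)

theory Defs
  imports "HOL-Analysis.Analysis" "HOL-Algebra.Group_Action"
begin

definition sigma_compact_space :: "'a topology \<Rightarrow> bool" where
  "sigma_compact_space X \<longleftrightarrow>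
     (\<exists>\<K>. countable \<K> \<and> (\<forall>K\<in>\<K>. compactin X K) \<and> \<Union>\<K> = topspace X)"

definition compatible_metric :: "'a topology \<Rightarrow> ('a \<Rightarrow> 'a \<Rightarrow> real) \<Rightarrow> bool" where
  "compatible_metric Z d \<longleftrightarrow>
     Metric_space (topspace Z) d \<and> Metric_space.mtopology (topspace Z) d = Z"

definition expansive_wrt ::
  "('g, 'm) monoid_scheme \<Rightarrow> 'a topology \<Rightarrow> ('g \<Rightarrow> 'a \<Rightarrow> 'a) \<Rightarrow> ('a \<Rightarrow> 'a \<Rightarrow> real) \<Rightarrow> bool" where
  "expansive_wrt G Z \<phi> d \<longleftrightarrow>
     (\<exists>c>0. \<forall>x\<in>topspace Z. \<forall>y\<in>topspace Z. x \<noteq> y \<longrightarrow>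
        (\<exists>g\<in>carrier G. d (\<phi> g x) (\<phi> g y) > c))"

definition MIE ::
  "('g, 'm) monoid_scheme \<Rightarrow> 'a topology \<Rightarrow> ('g \<Rightarrow> 'a \<Rightarrow> 'a) \<Rightarrow> bool" where
  "MIE G Z \<phi> \<longleftrightarrow> (\<forall>d. compatible_metric Z d \<longrightarrow> expansive_wrt G Z \<phi> d)"

definition continuous_action ::
  "('g, 'm) monoid_scheme \<Rightarrow> 'a topology \<Rightarrow> ('g \<Rightarrow> 'a \<Rightarrow> 'a) \<Rightarrow> bool" where
  "continuous_action G X \<phi> \<longleftrightarrow>
     group_action G (topspace X) \<phi> \<and> (\<forall>g\<in>carrier G. continuous_map X X (\<phi> g))"

definition disjoint_union_topology :: "'a topology \<Rightarrow> 'b topology \<Rightarrow> ('a + 'b) topology" where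
  "disjoint_union_topology X Y = topology (\<lambda>U.
      U \<subseteq> Inl ` topspace X \<union> Inr ` topspace Y \<and> openin X (Inl -` U) \<and> openin Y (Inr -` U))"

definition coproduct_action ::
  "('g \<Rightarrow> 'a \<Rightarrow> 'a) \<Rightarrow> ('g \<Rightarrow> 'b \<Rightarrow> 'b) \<Rightarrow> 'g \<Rightarrow> 'a + 'b \<Rightarrow> 'a + 'b" where
  "coproduct_action \<phi> \<psi> g z = (case z of Inl x \<Rightarrow> Inl (\<phi> g x) | Inr y \<Rightarrow> Inr (\<psi> g y))"

end

theory Submission
  imports Defs
begin

lemma istop_dut:
  fixes X :: "'a topology" and Y :: "'b topology"
  shows "istopology (\<lambda>U.
      U \<subseteq> Inl ` topspace X \<union> Inr ` topspace Y \<and> openin X (Inl -` U) \<and> openin Y (Inr -` U))"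
  unfolding istopology_def
proof (rule conjI; intro allI impI)
  fix S T :: "('a+'b) set"
  assume "S \<subseteq> Inl ` topspace X \<union> Inr ` topspace Y \<and> openin X (Inl -` S) \<and> openin Y (Inr -` S)"
     "T \<subseteq> Inl ` topspace X \<union> Inr ` topspace Y \<and> openin X (Inl -` T) \<and> openin Y (Inr -` T)"
  then show "S \<inter> T \<subseteq> Inl ` topspace X \<union> Inr ` topspace Y \<and> openin X (Inl -` (S \<inter> T)) \<and> openin Y (Inr -` (S \<inter> T))"
    by (auto simp: vimage_Int)
next
  fix K :: "('a+'b) set set"
  assume K: "\<forall>S\<in>K. S \<subseteq> Inl ` topspace X \<union> Inr ` topspace Y \<and> openin X (Inl -` S) \<and> openin Y (Inr -` S)"
  have 1: "Inl -` \<Union>K = \<Union>((\<lambda>S. Inl -` S) ` K)" "Inr -` \<Union>K = \<Union>((\<lambda>S. Inr -` S) ` K)" by auto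
  show "\<Union>K \<subseteq> Inl ` topspace X \<union> Inr ` topspace Y \<and> openin X (Inl -` \<Union>K) \<and> openin Y (Inr -` \<Union>K)"
    unfolding 1 using K by blast
qed

lemma openin_dut:
  "openin (disjoint_union_topology X Y) U \<longleftrightarrow>
     U \<subseteq> Inl ` topspace X \<union> Inr ` topspace Y \<and> openin X (Inl -` U) \<and> openin Y (Inr -` U)"
  unfolding disjoint_union_topology_def using istop_dut[of X Y] by (simp add: topology_inverse')

lemma topspace_dut: "topspace (disjoint_union_topology X Y) = Inl ` topspace X \<union> Inr ` topspace Y"
proof -
  have "openin (disjoint_union_topology X Y) (Inl ` topspace X \<union> Inr ` topspace Y)"
  proof -
    have "Inl -` (Inl ` topspace X \<union> Inr ` topspace Y) = topspace X"
         "Inr -` (Inl ` topspace X \<union> Inr ` topspace Y) = topspace Y" by auto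
    then show ?thesis unfolding openin_dut by simp
  qed
  moreover have "topspace (disjoint_union_topology X Y) \<subseteq> Inl ` topspace X \<union> Inr ` topspace Y"
    using openin_topspace[of "disjoint_union_topology X Y"] openin_dut by blast
  ultimately show ?thesis using openin_subset by blast
qed

lemma compat_transport:
  assumes Z: "compatible_metric Z d" and f: "inj f" "f ` S \<subseteq> topspace Z" "openin Z (f ` S)"
    and T: "topspace T = S" "\<And>U. U \<subseteq> S \<Longrightarrow> openin T U \<longleftrightarrow> openin Z (f ` U)"
  shows "compatible_metric T (\<lambda>a b. d (f a) (f b))"
proof -
  interpret Metric_space "topspace Z" d using Z unfolding compatible_metric_def by blast
  have Zeq: "mtopology = Z" using Z unfolding compatible_metric_def by blast
  have oZ: "openin Z V \<longleftrightarrow> V \<subseteq> topspace Z \<and> (\<forall>x. x \<in> V \<longrightarrow> (\<exists>r>0. mball x r \<subseteq> V))" for V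
    by (metis Zeq openin_mtopology)
  have MS: "Metric_space S (\<lambda>a b. d (f a) (f b))"
  proof
    show "0 \<le> d (f x) (f y)" for x y by simp
    show "d (f x) (f y) = d (f y) (f x)" for x y by (rule commute)
    show "d (f x) (f y) = 0 \<longleftrightarrow> x = y" if "x \<in> S" "y \<in> S" for x y
    proof -
      have "f x \<in> topspace Z" "f y \<in> topspace Z" using that f by auto
      then show ?thesis using zero f(1) by (auto simp: inj_eq)
    qed
    show "d (f x) (f z) \<le> d (f x) (f y) + d (f y) (f z)" if "x \<in> S" "y \<in> S" "z \<in> S" for x y z
      using that f by (intro triangle) auto
  qed
  interpret S: Metric_space S "\<lambda>a b. d (f a) (f b)" by (fact MS)
  have "openin S.mtopology U \<longleftrightarrow> openin T U" for U
  proof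
    assume U: "openin S.mtopology U"
    hence US: "U \<subseteq> S" by (simp add: S.openin_mtopology)
    have "openin Z (f ` U)"
      unfolding oZ
    proof (intro conjI allI impI)
      show "f ` U \<subseteq> topspace Z" using US f by auto
      fix z assume "z \<in> f ` U"
      then obtain a where a: "a \<in> U" "z = f a" by auto
      have U': "U \<subseteq> S \<and> (\<forall>x. x \<in> U \<longrightarrow> (\<exists>r>0. S.mball x r \<subseteq> U))"
        using U unfolding S.openin_mtopology .
      obtain r1 where r1: "r1 > 0" "S.mball a r1 \<subseteq> U" using U' a by blast
      have fS: "f ` S \<subseteq> topspace Z \<and> (\<forall>x. x \<in> f ` S \<longrightarrow> (\<exists>r>0. mball x r \<subseteq> f ` S))"
        using f(3) unfolding oZ .
      have "f a \<in> f ` S" using a US by blast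
      then obtain r0 where r0: "r0 > 0" "mball (f a) r0 \<subseteq> f ` S" using fS by blast
      show "\<exists>r>0. mball z r \<subseteq> f ` U"
      proof (intro exI[of _ "min r0 r1"] conjI)
        show "min r0 r1 > 0" using r0 r1 by simp
        show "mball z (min r0 r1) \<subseteq> f ` U"
        proof
          fix w assume w: "w \<in> mball z (min r0 r1)"
          then have "w \<in> f ` S" using r0 a by auto
          then obtain b where b: "b \<in> S" "w = f b" by auto
          then have "b \<in> S.mball a r1" using w a US by auto
          then show "w \<in> f ` U" using r1 b by auto
        qed
      qed
    qed
    then show "openin T U" using T US by blast
  next
    assume U: "openin T U"
    hence US: "U \<subseteq> S" using T openin_subset by blast
    have fU: "openin Z (f ` U)" using T US U by blast
    show "openin S.mtopology U"
      unfolding S.openin_mtopology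
    proof (intro conjI allI impI US)
      fix a assume a: "a \<in> U"
      have fU': "f ` U \<subseteq> topspace Z \<and> (\<forall>x. x \<in> f ` U \<longrightarrow> (\<exists>r>0. mball x r \<subseteq> f ` U))"
        using fU unfolding oZ .
      have "f a \<in> f ` U" using a by blast
      then obtain r where r: "r > 0" "mball (f a) r \<subseteq> f ` U" using fU' by blast
      have "S.mball a r \<subseteq> U"
      proof
        fix b assume "b \<in> S.mball a r"
        then have "f b \<in> mball (f a) r" using f by auto
        then have "f b \<in> f ` U" using r by blast
        then show "b \<in> U" using f(1) by (auto simp: inj_eq)
      qed
      then show "\<exists>r>0. S.mball a r \<subseteq> U" using r by blast
    qed
  qed
  then have "S.mtopology = T" by (intro topology_eq[THEN iffD2] allI)
  then show ?thesis unfolding compatible_metric_def using MS T by simp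
qed

lemma compat_collapse:
  assumes X: "compatible_metric X d" and rpos: "\<And>a. a \<in> topspace X \<Longrightarrow> r a > 0"
    and rlip: "\<And>a b. a \<in> topspace X \<Longrightarrow> b \<in> topspace X \<Longrightarrow> r a \<le> r b + d a b"
  shows "compatible_metric X (\<lambda>a b. min (d a b) (\<bar>r a\<bar> + \<bar>r b\<bar>))"
proof -
  interpret Metric_space "topspace X" d using X unfolding compatible_metric_def by blast
  have Xeq: "mtopology = X" using X unfolding compatible_metric_def by blast
  define \<rho> where "\<rho> = (\<lambda>a b. min (d a b) (\<bar>r a\<bar> + \<bar>r b\<bar>))"
  have MS: "Metric_space (topspace X) \<rho>"
  proof
    show "0 \<le> \<rho> x y" for x y unfolding \<rho>_def by simp
    show "\<rho> x y = \<rho> y x" for x y unfolding \<rho>_def by (simp add: commute add.commute)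
    show "\<rho> x y = 0 \<longleftrightarrow> x = y" if "x \<in> topspace X" "y \<in> topspace X" for x y
      using that rpos[of x] rpos[of y] unfolding \<rho>_def by (auto simp: min_def)
    show "\<rho> x z \<le> \<rho> x y + \<rho> y z" if "x \<in> topspace X" "y \<in> topspace X" "z \<in> topspace X" for x y z
    proof -
      have t: "d x z \<le> d x y + d y z" using that triangle by blast
      have l1: "r z \<le> r y + d y z" "r x \<le> r y + d x y" using rlip[of z y] rlip[of x y] that commute[of z y] commute[of x y] by auto
      show ?thesis using t l1 rpos[OF that(1)] rpos[OF that(2)] rpos[OF that(3)]
        unfolding \<rho>_def by (simp add: min_def)
    qed
  qed
  interpret R: Metric_space "topspace X" \<rho> by (fact MS)
  have le: "\<rho> a b \<le> d a b" for a b unfolding \<rho>_def by simp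
  have sub1: "mball a s \<subseteq> R.mball a s" for a s
  proof
    fix b assume "b \<in> mball a s"
    then show "b \<in> R.mball a s" using le[of a b] by auto
  qed
  have sub2: "R.mball a s \<subseteq> mball a s" if "s \<le> r a" for a s
  proof
    fix b assume b: "b \<in> R.mball a s"
    have a: "a \<in> topspace X" using b by simp
    have bX: "b \<in> topspace X" using b by simp
    have lt0: "\<rho> a b < s" using b by simp
    have lt: "min (d a b) (\<bar>r a\<bar> + \<bar>r b\<bar>) < s" using lt0 unfolding \<rho>_def .
    have ge: "s \<le> \<bar>r a\<bar> + \<bar>r b\<bar>" using that abs_ge_self[of "r a"] abs_ge_zero[of "r b"] by linarith
    have "d a b < s"
    proof (cases "d a b \<le> \<bar>r a\<bar> + \<bar>r b\<bar>")
      case True then show ?thesis using lt by (simp add: min_def)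
    next
      case False then show ?thesis using lt ge by (simp add: min_def)
    qed
    then show "b \<in> mball a s" using a bX by simp
  qed
  have "openin R.mtopology U \<longleftrightarrow> openin mtopology U" for U
  proof
    assume RU: "openin R.mtopology U"
    have RU': "U \<subseteq> topspace X \<and> (\<forall>x. x \<in> U \<longrightarrow> (\<exists>r>0. R.mball x r \<subseteq> U))"
      using RU unfolding R.openin_mtopology .
    show "openin mtopology U" unfolding openin_mtopology
    proof (intro conjI allI impI)
      show "U \<subseteq> topspace X" using RU' by (rule conjunct1)
      fix x assume "x \<in> U"
      then obtain t where t: "t > 0" "R.mball x t \<subseteq> U" using RU' by blast
      have "mball x t \<subseteq> U" using sub1[of x t] t(2) by (rule subset_trans)
      then show "\<exists>r>0. mball x r \<subseteq> U" using t(1) by blast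
    qed
  next
    assume U: "openin mtopology U"
    have U': "U \<subseteq> topspace X \<and> (\<forall>x. x \<in> U \<longrightarrow> (\<exists>r>0. mball x r \<subseteq> U))"
      using U unfolding openin_mtopology .
    show "openin R.mtopology U" unfolding R.openin_mtopology
    proof (intro conjI allI impI)
      show "U \<subseteq> topspace X" using U' by (rule conjunct1)
      fix a assume a: "a \<in> U"
      obtain s where s: "s > 0" "mball a s \<subseteq> U" using U' a by blast
      have aX: "a \<in> topspace X" using U' a by blast
      have ra: "r a > 0" using rpos aX .
      have "R.mball a (min s (r a)) \<subseteq> mball a (min s (r a))" by (rule sub2) simp
      also have "\<dots> \<subseteq> mball a s" by (rule mball_subset_concentric) simp
      also have "\<dots> \<subseteq> U" by (rule s(2))
      finally have "R.mball a (min s (r a)) \<subseteq> U" .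
      moreover have "min s (r a) > 0" using s(1) ra by simp
      ultimately show "\<exists>t>0. R.mball a t \<subseteq> U" by blast
    qed
  qed
  then have "R.mtopology = mtopology" by (intro topology_eq[THEN iffD2] allI)
  then have Rtop: "R.mtopology = X" using Xeq by (rule trans)
  have "compatible_metric X \<rho>" unfolding compatible_metric_def using MS Rtop by (rule conjI)
  then show ?thesis unfolding \<rho>_def .
qed

theorem mainTheorem7:
  fixes G :: "('g, 'm) monoid_scheme"
    and X :: "'a topology" and Y :: "'b topology"
    and \<phi> :: "'g \<Rightarrow> 'a \<Rightarrow> 'a" and \<psi> :: "'g \<Rightarrow> 'b \<Rightarrow> 'b"
  assumes "metrizable_space X" "locally_compact_space X" "sigma_compact_space X"
    and "metrizable_space Y" "locally_compact_space Y" "sigma_compact_space Y"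
    and "group G"
    and "continuous_action G X \<phi>" "continuous_action G Y \<psi>"
    and "MIE G X \<phi>" "MIE G Y \<psi>"
  shows "MIE G (disjoint_union_topology X Y) (coproduct_action \<phi> \<psi>)"
proof -
  let ?Z = "disjoint_union_topology X Y"
  have GX: "group_action G (topspace X) \<phi>" using assms(8) unfolding continuous_action_def by blast
  have GY: "group_action G (topspace Y) \<psi>" using assms(9) unfolding continuous_action_def by blast
  have one: "\<one>\<^bsub>G\<^esub> \<in> carrier G" using assms(7) by (metis group.is_monoid monoid.one_closed)
  have \<phi>1: "\<phi> \<one>\<^bsub>G\<^esub> x = x" if "x \<in> topspace X" for x
    using group_action.id_eq_one[OF GX] that by (metis restrict_apply')
  have \<psi>1: "\<psi> \<one>\<^bsub>G\<^esub> x = x" if "x \<in> topspace Y" for x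
    using group_action.id_eq_one[OF GY] that by (metis restrict_apply')
  have \<phi>cl: "\<phi> g x \<in> topspace X" if "g \<in> carrier G" "x \<in> topspace X" for g x
    using group_action.element_image[OF GX that] by blast
  have \<psi>cl: "\<psi> g x \<in> topspace Y" if "g \<in> carrier G" "x \<in> topspace Y" for g x
    using group_action.element_image[OF GY that] by blast
  have tsZ: "topspace ?Z = Inl ` topspace X \<union> Inr ` topspace Y" by (rule topspace_dut)
  have vi: "Inl -` Inl ` A = A" "Inr -` Inl ` A = {}" "Inr -` Inr ` B = B" "Inl -` Inr ` B = {}"
    for A :: "'a set" and B :: "'b set" by auto
  have oX: "openin ?Z (Inl ` topspace X)" unfolding openin_dut vi by auto
  have oY: "openin ?Z (Inr ` topspace Y)" unfolding openin_dut vi by auto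
  show ?thesis unfolding MIE_def
  proof (intro allI impI)
    fix d assume dZ: "compatible_metric ?Z d"
    interpret Metric_space "topspace ?Z" d using dZ unfolding compatible_metric_def by blast
    have Zeq: "mtopology = ?Z" using dZ unfolding compatible_metric_def by blast
    have compX: "compatible_metric X (\<lambda>a b. d (Inl a) (Inl b))"
    proof (rule compat_transport[OF dZ _ _ oX])
      show "openin X U \<longleftrightarrow> openin ?Z (Inl ` U)" if "U \<subseteq> topspace X" for U
        unfolding openin_dut vi using that by auto
    qed (auto simp: tsZ)
    have compY: "compatible_metric Y (\<lambda>a b. d (Inr a) (Inr b))"
    proof (rule compat_transport[OF dZ _ _ oY])
      show "openin Y U \<longleftrightarrow> openin ?Z (Inr ` U)" if "U \<subseteq> topspace Y" for U
        unfolding openin_dut vi using that by auto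
    qed (auto simp: tsZ)
    have eX: "expansive_wrt G X \<phi> (\<lambda>a b. d (Inl a) (Inl b))" using assms(10) compX unfolding MIE_def by blast
    then obtain cX where cX1: "cX > 0" and cX2: "\<forall>x\<in>topspace X. \<forall>y\<in>topspace X. x \<noteq> y \<longrightarrow>
        (\<exists>g\<in>carrier G. d (Inl (\<phi> g x)) (Inl (\<phi> g y)) > cX)"
      unfolding expansive_wrt_def by blast
    note cX = cX1 cX2[rule_format]
    have eY: "expansive_wrt G Y \<psi> (\<lambda>a b. d (Inr a) (Inr b))" using assms(11) compY unfolding MIE_def by blast
    then obtain cY where cY1: "cY > 0" and cY2: "\<forall>x\<in>topspace Y. \<forall>y\<in>topspace Y. x \<noteq> y \<longrightarrow>
        (\<exists>g\<in>carrier G. d (Inr (\<psi> g x)) (Inr (\<psi> g y)) > cY)"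
      unfolding expansive_wrt_def by blast
    note cY = cY1 cY2[rule_format]
    have mixed: "\<exists>c>0. \<forall>x\<in>topspace X. \<forall>y\<in>topspace Y. \<exists>g\<in>carrier G. d (Inl (\<phi> g x)) (Inr (\<psi> g y)) > c"
    proof (cases "topspace Y = {}")
      case True then show ?thesis by (intro exI[of _ 1]) auto
    next
      case False
      define r where "r a = Inf ((\<lambda>b. d (Inl a) (Inr b)) ` topspace Y)" for a
      have bdd: "bdd_below ((\<lambda>b. d (Inl a) (Inr b)) ` topspace Y)" for a
        by (rule bdd_belowI[of _ 0]) auto
      have rle: "r a \<le> d (Inl a) (Inr b)" if "b \<in> topspace Y" for a b
        unfolding r_def by (rule cInf_lower) (use bdd that in auto)
      have oXm: "openin mtopology (Inl ` topspace X)" by (subst Zeq) (rule oX)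
      then have oXm': "Inl ` topspace X \<subseteq> topspace ?Z \<and> (\<forall>x. x \<in> Inl ` topspace X \<longrightarrow> (\<exists>r>0. mball x r \<subseteq> Inl ` topspace X))"
        unfolding openin_mtopology .
      have rpos: "r a > 0" if a: "a \<in> topspace X" for a
      proof -
        have aX: "Inl a \<in> Inl ` topspace X" using a by (rule imageI)
        have "\<exists>r>0. mball (Inl a) r \<subseteq> Inl ` topspace X"
          by (rule conjunct2[OF oXm', rule_format, OF aX])
        then obtain e where e: "e > 0" "mball (Inl a) e \<subseteq> Inl ` topspace X"
          by (elim exE conjE) (rule that)
        have aZ: "Inl a \<in> topspace ?Z" unfolding tsZ using a by simp
        have eb: "e \<le> d (Inl a) (Inr b)" if b: "b \<in> topspace Y" for b
        proof (rule ccontr)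
          assume ne: "\<not> e \<le> d (Inl a) (Inr b)"
          have bZ: "Inr b \<in> topspace ?Z" unfolding tsZ using b by simp
          have "Inr b \<in> mball (Inl a) e" using aZ bZ ne by simp
          then have "Inr b \<in> Inl ` topspace X" using e(2) by (rule subsetD[rotated])
          then show False by (simp add: image_iff)
        qed
        have "e \<le> r a" unfolding r_def
        proof (rule cInf_greatest)
          show "(\<lambda>b. d (Inl a) (Inr b)) ` topspace Y \<noteq> {}" using False by simp
          fix t assume "t \<in> (\<lambda>b. d (Inl a) (Inr b)) ` topspace Y"
          then obtain b where "b \<in> topspace Y" "t = d (Inl a) (Inr b)" by (elim imageE)
          then show "e \<le> t" using eb by simp
        qed
        then show ?thesis using e(1) by simp
      qed
      have rlip: "r a \<le> r b + d (Inl a) (Inl b)" if a: "a \<in> topspace X" and b: "b \<in> topspace X" for a b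
      proof -
        have aZ: "Inl a \<in> topspace ?Z" unfolding tsZ using a by simp
        have bZ: "Inl b \<in> topspace ?Z" unfolding tsZ using b by simp
        have "r a - d (Inl a) (Inl b) \<le> r b" unfolding r_def[of b]
        proof (rule cInf_greatest)
          show "(\<lambda>y. d (Inl b) (Inr y)) ` topspace Y \<noteq> {}" using False by simp
          fix t assume "t \<in> (\<lambda>y. d (Inl b) (Inr y)) ` topspace Y"
          then obtain y where y: "y \<in> topspace Y" "t = d (Inl b) (Inr y)" by (elim imageE)
          have yZ: "Inr y \<in> topspace ?Z" unfolding tsZ using y(1) by simp
          have "r a \<le> d (Inl a) (Inr y)" by (rule rle[OF y(1)])
          also have "\<dots> \<le> d (Inl a) (Inl b) + d (Inl b) (Inr y)" by (rule triangle[OF aZ bZ yZ])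
          finally show "r a - d (Inl a) (Inl b) \<le> t" using y(2) by linarith
        qed
        then show ?thesis by linarith
      qed
      define \<rho> where "\<rho> = (\<lambda>a b. min (d (Inl a) (Inl b)) (\<bar>r a\<bar> + \<bar>r b\<bar>))"
      have compR: "compatible_metric X \<rho>"
        unfolding \<rho>_def by (rule compat_collapse[OF compX rpos rlip])
      have eR: "expansive_wrt G X \<phi> \<rho>" using assms(10) compR unfolding MIE_def by blast
      then obtain cR where cR1: "cR > 0" and cR2: "\<forall>x\<in>topspace X. \<forall>y\<in>topspace X. x \<noteq> y \<longrightarrow>
          (\<exists>g\<in>carrier G. \<rho> (\<phi> g x) (\<phi> g y) > cR)"
        unfolding expansive_wrt_def by blast
      note cR = cR1 cR2[rule_format]
      show ?thesis
      proof (rule ccontr)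
        assume neg: "\<not> ?thesis"
        have bad: "\<exists>x\<in>topspace X. \<exists>y\<in>topspace Y. \<forall>g\<in>carrier G. d (Inl (\<phi> g x)) (Inr (\<psi> g y)) \<le> c"
          if c: "c > 0" for c
        proof (rule ccontr)
          assume nb: "\<not> ?thesis"
          have "\<forall>x\<in>topspace X. \<forall>y\<in>topspace Y. \<exists>g\<in>carrier G. d (Inl (\<phi> g x)) (Inr (\<psi> g y)) > c"
          proof (intro ballI)
            fix x y assume "x \<in> topspace X" "y \<in> topspace Y"
            then have "\<not> (\<forall>g\<in>carrier G. d (Inl (\<phi> g x)) (Inr (\<psi> g y)) \<le> c)" using nb by blast
            then show "\<exists>g\<in>carrier G. d (Inl (\<phi> g x)) (Inr (\<psi> g y)) > c" by (simp add: not_le)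
          qed
          then show False using neg c by blast
        qed
        have rsmall: "r x \<le> c" if xy: "x \<in> topspace X" "y \<in> topspace Y"
          and hc: "\<forall>g\<in>carrier G. d (Inl (\<phi> g x)) (Inr (\<psi> g y)) \<le> c" for x y c
        proof -
          have "r x \<le> d (Inl x) (Inr y)" by (rule rle[OF xy(2)])
          also have "\<dots> = d (Inl (\<phi> \<one>\<^bsub>G\<^esub> x)) (Inr (\<psi> \<one>\<^bsub>G\<^esub> y))"
            by (simp add: \<phi>1[OF xy(1)] \<psi>1[OF xy(2)])
          also have "\<dots> \<le> c" using hc one by (rule bspec)
          finally show ?thesis .
        qed
        have "cR / 4 > 0" using cR(1) by simp
        then obtain x1 y1 where x1: "x1 \<in> topspace X" "y1 \<in> topspace Y"
          "\<forall>g\<in>carrier G. d (Inl (\<phi> g x1)) (Inr (\<psi> g y1)) \<le> cR / 4"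
          using bad by blast
        have r1: "r x1 > 0" by (rule rpos[OF x1(1)])
        have "min (cR / 4) (r x1 / 2) > 0" using cR(1) r1 by simp
        then obtain x2 y2 where x2: "x2 \<in> topspace X" "y2 \<in> topspace Y"
          "\<forall>g\<in>carrier G. d (Inl (\<phi> g x2)) (Inr (\<psi> g y2)) \<le> min (cR / 4) (r x1 / 2)"
          using bad by blast
        have "r x2 \<le> min (cR / 4) (r x1 / 2)" by (rule rsmall[OF x2])
        then have "r x2 < r x1" using r1 by linarith
        then have "x1 \<noteq> x2" by auto
        then obtain g where g: "g \<in> carrier G" "\<rho> (\<phi> g x1) (\<phi> g x2) > cR"
          using cR(2)[OF x1(1) x2(1)] by blast
        have gx1: "\<phi> g x1 \<in> topspace X" by (rule \<phi>cl[OF g(1) x1(1)])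
        have gx2: "\<phi> g x2 \<in> topspace X" by (rule \<phi>cl[OF g(1) x2(1)])
        have gy1: "\<psi> g y1 \<in> topspace Y" by (rule \<psi>cl[OF g(1) x1(2)])
        have gy2: "\<psi> g y2 \<in> topspace Y" by (rule \<psi>cl[OF g(1) x2(2)])
        have p1: "r (\<phi> g x1) > 0" by (rule rpos[OF gx1])
        have p2: "r (\<phi> g x2) > 0" by (rule rpos[OF gx2])
        have "\<rho> (\<phi> g x1) (\<phi> g x2) \<le> \<bar>r (\<phi> g x1)\<bar> + \<bar>r (\<phi> g x2)\<bar>" unfolding \<rho>_def by simp
        also have "\<dots> = r (\<phi> g x1) + r (\<phi> g x2)" using p1 p2 by simp
        also have "\<dots> \<le> d (Inl (\<phi> g x1)) (Inr (\<psi> g y1)) + d (Inl (\<phi> g x2)) (Inr (\<psi> g y2))"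
          by (rule add_mono[OF rle[OF gy1] rle[OF gy2]])
        also have "\<dots> \<le> cR / 4 + min (cR / 4) (r x1 / 2)"
          by (rule add_mono[OF bspec[OF x1(3) g(1)] bspec[OF x2(3) g(1)]])
        also have "\<dots> \<le> cR / 2" by simp
        finally show False using g(2) cR(1) by simp
      qed
    qed
    then obtain cM where cM: "cM > 0" "\<And>x y. x \<in> topspace X \<Longrightarrow> y \<in> topspace Y \<Longrightarrow>
        \<exists>g\<in>carrier G. d (Inl (\<phi> g x)) (Inr (\<psi> g y)) > cM" by blast
    show "expansive_wrt G ?Z (coproduct_action \<phi> \<psi>) d"
      unfolding expansive_wrt_def
    proof (intro exI[of _ "min cX (min cY cM)"] conjI ballI impI)
      show "min cX (min cY cM) > 0" using cX cY cM by simp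
      fix z w assume z: "z \<in> topspace ?Z" and w: "w \<in> topspace ?Z" and zw: "z \<noteq> w"
      show "\<exists>g\<in>carrier G. d (coproduct_action \<phi> \<psi> g z) (coproduct_action \<phi> \<psi> g w) > min cX (min cY cM)"
      proof -
        have "(\<exists>x\<in>topspace X. z = Inl x) \<or> (\<exists>y\<in>topspace Y. z = Inr y)" using z tsZ by auto
        moreover have "(\<exists>x\<in>topspace X. w = Inl x) \<or> (\<exists>y\<in>topspace Y. w = Inr y)" using w tsZ by auto
        ultimately show ?thesis
        proof (elim disjE bexE)
          fix x x'
          assume h: "x \<in> topspace X" "z = Inl x" "x' \<in> topspace X" "w = Inl x'"
          then have "x \<noteq> x'" using zw by auto
          then obtain g where "g \<in> carrier G" "d (Inl (\<phi> g x)) (Inl (\<phi> g x')) > cX" using cX(2) h by blast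
          then show ?thesis using h by (intro bexI[of _ g]) (auto simp: coproduct_action_def)
        next
          fix x y
          assume h: "x \<in> topspace X" "z = Inl x" "y \<in> topspace Y" "w = Inr y"
          then obtain g where "g \<in> carrier G" "d (Inl (\<phi> g x)) (Inr (\<psi> g y)) > cM" using cM(2) by blast
          then show ?thesis using h by (intro bexI[of _ g]) (auto simp: coproduct_action_def)
        next
          fix x y assume xy: "y \<in> topspace Y" "z = Inr y" "x \<in> topspace X" "w = Inl x"
          then obtain g where g: "g \<in> carrier G" "d (Inl (\<phi> g x)) (Inr (\<psi> g y)) > cM" using cM(2) by blast
          then show ?thesis using xy commute[of "Inr (\<psi> g y)" "Inl (\<phi> g x)"]
            by (intro bexI[of _ g]) (auto simp: coproduct_action_def)
        next
          fix y y'
          assume h: "y \<in> topspace Y" "z = Inr y" "y' \<in> topspace Y" "w = Inr y'"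
          then have "y \<noteq> y'" using zw by auto
          then obtain g where "g \<in> carrier G" "d (Inr (\<psi> g y)) (Inr (\<psi> g y')) > cY" using cY(2) h by blast
          then show ?thesis using h by (intro bexI[of _ g]) (auto simp: coproduct_action_def)
        qed
      qed
    qed
  qed
qed

end
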